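(* $\mathcal M=\mathrm{clos}(\mathcal M_0)\cap\mathbb D$.
   Context: $\mathbb D=\{z\in\mathbb C:|z|<1\}$. $\mathcal M=\{\lambda\in\mathbb D:\ \exists (a_k)_{k\ge1},\ a_k\in\{-1,0,1\},\ 1+\sum_{k\ge1}a_k\lambda^k=0\}$. $\mathcal M_0=\{\lambda\in\mathbb D:\ \exists n\ge1,\ a_1,\dots,a_n\in\{-1,0,1\},\ 1+\sum_{k=1}^n a_k\lambda^k=0\}$. *)

theory Defs
  imports "HOL-Analysis.Analysis"
begin

definition unit_disc :: "complex set" where
  "unit_disc = {z. cmod z < 1}"

definition M_set :: "complex set" where
  "M_set = {z \<in> unit_disc. \<exists>a :: nat \<Rightarrow> int.
      (\<forall>k\<ge>1. a k \<in> {-1, 0, 1}) \<and>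
      1 + (\<Sum>k. of_int (a (Suc k)) * z ^ Suc k) = 0}"

definition M0_set :: "complex set" where
  "M0_set = {z \<in> unit_disc. \<exists>n\<ge>1. \<exists>a :: nat \<Rightarrow> int.
      (\<forall>k\<in>{1..n}. a k \<in> {-1, 0, 1}) \<and>
      1 + (\<Sum>k=1..n. of_int (a k) * z ^ k) = 0}"

end

theory Submission imports Defs "HOL-Complex_Analysis.Complex_Analysis"
begin

definition okc :: "(nat \<Rightarrow> int) \<Rightarrow> bool" where
  "okc a \<longleftrightarrow> (\<forall>k\<ge>1. a k \<in> {-1, 0, 1})"

definition GG :: "(nat \<Rightarrow> int) \<Rightarrow> complex \<Rightarrow> complex" where
  "GG a w = 1 + (\<Sum>k. of_int (a (Suc k)) * w ^ Suc k)"

definition PP :: "(nat \<Rightarrow> int) \<Rightarrow> nat \<Rightarrow> complex \<Rightarrow> complex" where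
  "PP a n w = 1 + (\<Sum>k<n. of_int (a (Suc k)) * w ^ Suc k)"

lemma okc_norm: "okc a \<Longrightarrow> norm (of_int (a (Suc k)) :: complex) \<le> 1"
  unfolding okc_def by (drule spec[of _ "Suc k"]) auto

lemma term_bound: "okc a \<Longrightarrow> norm (of_int (a (Suc k)) * (w::complex) ^ Suc k) \<le> norm w ^ Suc k"
proof -
  assume "okc a"
  then have "norm (of_int (a (Suc k)) :: complex) \<le> 1" by (rule okc_norm)
  then have "norm (of_int (a (Suc k)) :: complex) * norm w ^ Suc k \<le> 1 * norm w ^ Suc k"
    by (intro mult_right_mono) auto
  then show ?thesis by (simp add: norm_mult norm_power)
qed

lemma summ_geo: "0 \<le> (r::real) \<Longrightarrow> r < 1 \<Longrightarrow> summable (\<lambda>k. r ^ Suc k)"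
  using summable_geometric[of r] summable_Suc_iff[of "\<lambda>k. r ^ k"] by simp

lemma summ_terms: "okc a \<Longrightarrow> norm (w::complex) < 1 \<Longrightarrow> summable (\<lambda>k. norm (of_int (a (Suc k)) * w ^ Suc k))"
proof -
  assume a: "okc a" and w: "norm w < 1"
  show ?thesis
  proof (rule summable_norm_comparison_test[OF _ summ_geo[of "norm w"]])
    show "\<exists>N. \<forall>k\<ge>N. norm (of_int (a (Suc k)) * w ^ Suc k) \<le> norm w ^ Suc k"
      using term_bound[OF a] by blast
  qed (use w in auto)
qed

lemma summ_terms': "okc a \<Longrightarrow> norm (w::complex) < 1 \<Longrightarrow> summable (\<lambda>k. of_int (a (Suc k)) * w ^ Suc k)"
  by (rule summable_norm_cancel[OF summ_terms])

lemma unif: assumes "okc a" "0 \<le> \<rho>" "\<rho> < 1"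
  shows "uniform_limit (cball 0 \<rho>) (PP a) (GG a) sequentially"
proof -
  have bd: "norm (of_int (a (Suc n)) * x ^ Suc n) \<le> \<rho> ^ Suc n" if "x \<in> cball 0 \<rho>" for n and x :: complex
  proof -
    from that have "norm x \<le> \<rho>" by simp
    then have "norm x ^ Suc n \<le> \<rho> ^ Suc n" by (intro power_mono) auto
    then show ?thesis
      by (rule order_trans[OF term_bound[OF assms(1)]])
  qed
  have "uniform_limit (cball 0 \<rho>) (\<lambda>n w. \<Sum>k<n. of_int (a (Suc k)) * (w::complex) ^ Suc k)
      (\<lambda>w. \<Sum>k. of_int (a (Suc k)) * w ^ Suc k) sequentially"
    using Weierstrass_m_test[of "cball 0 \<rho>" "\<lambda>k w. of_int (a (Suc k)) * w ^ Suc k" "\<lambda>k. \<rho> ^ Suc k", OF bd summ_geo[OF assms(2,3)]]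
    by simp
  then have "uniform_limit (cball 0 \<rho>) (\<lambda>n w. 1 + (\<Sum>k<n. of_int (a (Suc k)) * (w::complex) ^ Suc k))
      (\<lambda>w. 1 + (\<Sum>k. of_int (a (Suc k)) * w ^ Suc k)) sequentially"
    by (intro uniform_limit_add uniform_limit_const)
  then show ?thesis unfolding PP_def[abs_def] GG_def[abs_def] .
qed

lemma holo: assumes "okc a" shows "GG a holomorphic_on ball 0 1"
proof (rule holomorphic_uniform_sequence[where f = "PP a"])
  fix n show "PP a n holomorphic_on ball 0 1" unfolding PP_def by (intro holomorphic_intros)
next
  fix x :: complex assume "x \<in> ball 0 1"
  then have x: "norm x < 1" by simp
  define d where "d = (1 - norm x) / 2"
  have sub: "cball x d \<subseteq> cball 0 ((1 + norm x)/2)"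
  proof
    fix y assume "y \<in> cball x d"
    then have "norm (y - x) \<le> d" by (simp add: dist_norm norm_minus_commute)
    then have "norm y \<le> norm x + d" using norm_triangle_ineq2[of y x] by linarith
    then show "y \<in> cball 0 ((1 + norm x)/2)" by (simp add: d_def field_simps)
  qed
  have "cball 0 ((1 + norm x)/2) \<subseteq> ball 0 1" using x by auto
  moreover have "uniform_limit (cball x d) (PP a) (GG a) sequentially"
    using uniform_limit_on_subset[OF unif[OF assms, of "(1 + norm x)/2"] sub] x by simp
  ultimately show "\<exists>d>0. cball x d \<subseteq> ball 0 1 \<and> uniform_limit (cball x d) (PP a) (GG a) sequentially"
    using sub x by (intro exI[of _ d]) (auto simp: d_def)
qed auto

lemma GG0: "GG a 0 = 1" by (simp add: GG_def)

lemma tail: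
  assumes "okc a" "okc b" "\<And>k. 1 \<le> k \<Longrightarrow> k \<le> K \<Longrightarrow> a k = b k" "0 \<le> \<sigma>" "\<sigma> < 1" "norm w \<le> \<sigma>^2"
  shows "norm (GG a w - GG b w) \<le> 2 * \<sigma>^K / (1 - \<sigma>)"
proof -
  have s2: "\<sigma>^2 < 1" using assms(4,5) by (simp add: power_less_one_iff)
  then have w: "norm w < 1" using assms(6) by linarith
  define t where "t = (\<lambda>k. of_int (a (Suc k) - b (Suc k)) * w ^ Suc k)"
  have "GG a w - GG b w = (\<Sum>k. of_int (a (Suc k)) * w ^ Suc k) - (\<Sum>k. of_int (b (Suc k)) * w ^ Suc k)"
    by (simp add: GG_def)
  also have "\<dots> = (\<Sum>k. t k)"
    unfolding t_def
    by (subst suminf_diff[OF summ_terms'[OF assms(1) w] summ_terms'[OF assms(2) w]]) (simp only: of_int_diff left_diff_distrib)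
  finally have eq: "GG a w - GG b w = (\<Sum>k. t k)" .
  have tb: "norm (t k) \<le> 2 * \<sigma>^K * \<sigma>^k" for k
  proof (cases "Suc k \<le> K")
    case True
    then have "t k = 0" using assms(3)[of "Suc k"] by (simp add: t_def)
    then show ?thesis using assms(4) by simp
  next
    case False
    have "norm (of_int (a (Suc k) - b (Suc k)) :: complex) \<le> 2"
      using assms(1,2) unfolding okc_def
      apply (drule_tac x="Suc k" in spec) apply (drule_tac x="Suc k" in spec) by auto
    moreover have "norm w ^ Suc k \<le> (\<sigma>^2) ^ Suc k" by (intro power_mono assms(6)) auto
    moreover have "(\<sigma>^2) ^ Suc k \<le> \<sigma>^(K + k)"
    proof -
      have "(\<sigma>^2) ^ Suc k = \<sigma>^(2 * Suc k)" by (simp only: power_mult)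
      also have "\<dots> \<le> \<sigma>^(K + k)"
      proof (rule power_decreasing)
        show "K + k \<le> 2 * Suc k" using False by simp
      qed (use assms(4,5) in auto)
      finally show ?thesis .
    qed
    ultimately have n2: "norm (of_int (a (Suc k) - b (Suc k)) :: complex) \<le> 2"
      and nw: "norm w ^ Suc k \<le> \<sigma>^(K + k)" by linarith+
    have "norm (of_int (a (Suc k) - b (Suc k)) :: complex) * norm w ^ Suc k \<le> 2 * \<sigma>^(K + k)"
      by (rule mult_mono[OF n2 nw]) simp_all
    then show ?thesis by (simp add: t_def norm_mult norm_power power_add mult.assoc)
  qed
  have sg: "summable (\<lambda>k. 2 * \<sigma>^K * \<sigma>^k)"
    using assms(4,5) by (intro summable_mult summable_geometric) auto
  have sn: "summable (\<lambda>k. norm (t k))"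
    by (rule summable_norm_comparison_test[OF _ sg]) (use tb in blast)
  have "norm (\<Sum>k. t k) \<le> (\<Sum>k. norm (t k))" by (rule summable_norm[OF sn])
  also have "\<dots> \<le> (\<Sum>k. 2 * \<sigma>^K * \<sigma>^k)" by (rule suminf_le[OF tb sn sg])
  also have "\<dots> = 2 * \<sigma>^K * (\<Sum>k. \<sigma>^k)"
    by (rule suminf_mult) (rule summable_geometric, use assms(4,5) in simp)
  also have "\<dots> = 2 * \<sigma>^K * (1 / (1 - \<sigma>))"
    by (subst suminf_geometric) (use assms(4,5) in auto)
  also have "\<dots> = 2 * \<sigma>^K / (1 - \<sigma>)" by simp
  finally show ?thesis using eq by simp
qed


lemma M_sub: assumes "z \<in> M_set" shows "z \<in> closure M0_set"
proof (rule ccontr)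
  assume nc: "z \<notin> closure M0_set"
  from assms obtain a where z: "norm z < 1" and a: "\<forall>k\<ge>1. a k \<in> {-1, 0, 1}"
    and f: "1 + (\<Sum>k. of_int (a (Suc k)) * z ^ Suc k) = 0"
    unfolding M_set_def unit_disc_def by auto
  have oka: "okc a" using a by (simp add: okc_def)
  have Gz: "GG a z = 0" using f by (simp add: GG_def)
  have "open (- closure M0_set)" by auto
  then obtain r0 where r0: "r0 > 0" "ball z r0 \<subseteq> - closure M0_set"
    using nc open_contains_ball by blast
  define r where "r = min r0 (1 - norm z)"
  have r: "r > 0" using r0 z by (simp add: r_def)
  have sub1: "ball z r \<subseteq> ball 0 1"
  proof
    fix y assume "y \<in> ball z r"
    then have "norm (y - z) < 1 - norm z" by (simp add: r_def dist_norm norm_minus_commute)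
    then have "norm y < 1" using norm_triangle_ineq2[of y z] by linarith
    then show "y \<in> ball 0 1" by simp
  qed
  have sub2: "y \<notin> M0_set" if "y \<in> ball z r" for y
  proof -
    have "y \<in> ball z r0" using that by (simp add: r_def)
    then have "y \<notin> closure M0_set" using r0(2) by blast
    then show ?thesis using closure_subset by blast
  qed
  have "GG a z \<noteq> 0"
  proof (rule Hurwitz_no_zeros[of "ball z r" "PP a" "GG a"])
    show "open (ball z r)" by simp
    show "connected (ball z r)" by simp
    show "PP a n holomorphic_on ball z r" for n unfolding PP_def by (intro holomorphic_intros)
    show "GG a holomorphic_on ball z r" by (rule holomorphic_on_subset[OF holo[OF oka] sub1])
    show "z \<in> ball z r" using r by simp
  next
    fix K :: "complex set" assume K: "compact K" "K \<subseteq> ball z r"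
    obtain \<rho> where \<rho>: "0 \<le> \<rho>" "\<rho> < 1" "K \<subseteq> cball 0 \<rho>"
    proof (cases "K = {}")
      case True then show ?thesis using that[of 0] by simp
    next
      case False
      have "continuous_on K norm" by (intro continuous_intros)
      then obtain x where x: "x \<in> K" "\<forall>y\<in>K. norm y \<le> norm x"
        using continuous_attains_sup[OF K(1) False] by blast
      have "norm x < 1" using x(1) K(2) sub1 by auto
      have "K \<subseteq> cball 0 (norm x)"
      proof
        fix y assume "y \<in> K"
        then show "y \<in> cball 0 (norm x)" using x(2) by simp
      qed
      then show ?thesis using that[of "norm x"] \<open>norm x < 1\<close> by simp
    qed
    show "uniform_limit K (PP a) (GG a) sequentially"
      by (rule uniform_limit_on_subset[OF unif[OF oka \<rho>(1,2)] \<rho>(3)])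
  next
    show "\<not> GG a constant_on ball z r"
    proof
      assume "GG a constant_on ball z r"
      then obtain c where c: "\<And>x. x \<in> ball z r \<Longrightarrow> GG a x = c" unfolding constant_on_def by blast
      have c0: "c = 0" using c[of z] Gz r by simp
      have "GG a 0 = 0"
      proof (rule analytic_continuation[OF holo[OF oka] open_ball connected_ball sub1])
        show "z \<in> ball 0 1" using z by simp
        show "z islimpt ball z r" using r by (simp add: islimpt_ball)
        show "\<And>x. x \<in> ball z r \<Longrightarrow> GG a x = 0" using c c0 by simp
        show "(0::complex) \<in> ball 0 1" by simp
      qed
      then show False by (simp add: GG0)
    qed
  next
    fix n w assume w: "w \<in> ball z r"
    show "PP a n w \<noteq> 0"
    proof
      assume P0: "PP a n w = 0"
      have n: "n \<noteq> 0" using P0 by (cases n) (auto simp: PP_def)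
      have eqs: "(\<Sum>k<n. of_int (a (Suc k)) * w ^ Suc k) = (\<Sum>k=1..n. of_int (a k) * w ^ k)"
        using sum.atLeast1_atMost_eq[of "\<lambda>k. of_int (a k) * w ^ k" n] by simp
      have "w \<in> M0_set"
        unfolding M0_set_def unit_disc_def
      proof (intro CollectI conjI exI)
        show "norm w < 1" using w sub1 by auto
        show "1 \<le> n" using n by simp
        show "\<forall>k\<in>{1..n}. a k \<in> {-1, 0, 1}" using a by auto
        show "1 + (\<Sum>k=1..n. of_int (a k) * w ^ k) = 0" using P0 eqs by (simp add: PP_def)
      qed
      then show False using sub2 w by blast
    qed
  qed
  then show False using Gz by simp
qed

definition pick :: "(nat \<Rightarrow> nat \<Rightarrow> int) \<Rightarrow> nat set \<Rightarrow> nat \<Rightarrow> int" where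
  "pick c S k = (if infinite {m\<in>S. c m k = -1} then -1 else if infinite {m\<in>S. c m k = 0} then 0 else 1)"

primrec Ak :: "(nat \<Rightarrow> nat \<Rightarrow> int) \<Rightarrow> nat \<Rightarrow> nat set" where
  "Ak c 0 = UNIV"
| "Ak c (Suc K) = {m \<in> Ak c K. c m (Suc K) = pick c (Ak c K) (Suc K)}"

lemma pick_inf:
  assumes "infinite S" "\<forall>m\<in>S. c m k \<in> {-1,0,1}"
  shows "infinite {m\<in>S. c m k = pick c S k}"
proof (cases "infinite {m\<in>S. c m k = -1}")
  case True then show ?thesis by (simp add: pick_def)
next
  case F1: False
  show ?thesis
  proof (cases "infinite {m\<in>S. c m k = 0}")
    case True with F1 show ?thesis by (simp add: pick_def)
  next
    case F2: False
    have eq: "S = {m\<in>S. c m k = -1} \<union> {m\<in>S. c m k = 0} \<union> {m\<in>S. c m k = 1}"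
      using assms(2) by auto
    have "infinite {m\<in>S. c m k = 1}"
    proof
      assume "finite {m\<in>S. c m k = 1}"
      then have "finite ({m\<in>S. c m k = -1} \<union> {m\<in>S. c m k = 0} \<union> {m\<in>S. c m k = 1})"
        using F1 F2 by blast
      then show False using eq assms(1) by simp
    qed
    with F1 F2 show ?thesis by (simp add: pick_def)
  qed
qed

lemma Ak_inf: assumes "\<forall>m k. c m k \<in> {-1,0,1}" shows "infinite (Ak c K)"
proof (induction K)
  case 0 then show ?case by simp
next
  case (Suc K)
  have "infinite {m \<in> Ak c K. c m (Suc K) = pick c (Ak c K) (Suc K)}"
    by (rule pick_inf[OF Suc]) (use assms in blast)
  then show ?case by simp
qed

lemma Ak_agree: "m \<in> Ak c K \<Longrightarrow> 1 \<le> k \<Longrightarrow> k \<le> K \<Longrightarrow> c m k = pick c (Ak c (k - 1)) k"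
proof (induction K)
  case 0 then show ?case by simp
next
  case (Suc K)
  then have m: "m \<in> Ak c K" "c m (Suc K) = pick c (Ak c K) (Suc K)" by auto
  show ?case
  proof (cases "k = Suc K")
    case True then show ?thesis using m by simp
  next
    case False then show ?thesis using Suc m by simp
  qed
qed

lemma choice3: "(\<forall>m. \<exists>x y z. P m x y z) \<Longrightarrow> \<exists>f g h. \<forall>m. P m (f m) (g m) (h m)"
  by metis

lemma M_sup: assumes "z \<in> closure M0_set" "z \<in> unit_disc" shows "z \<in> M_set"
proof -
  have z: "norm z < 1" using assms(2) by (simp add: unit_disc_def)
  have "\<forall>m::nat. \<exists>w N b. norm w < 1 \<and> N \<ge> 1 \<and> (\<forall>k\<in>{1..N}. b k \<in> {-1, 0, 1 :: int}) \<and>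
      1 + (\<Sum>k=1..N. of_int (b k) * w ^ k) = 0 \<and> dist w z < 1 / real (Suc m)"
  proof
    fix m :: nat
    have "1 / real (Suc m) > 0" by simp
    then obtain y where y: "y \<in> M0_set" "dist y z < 1 / real (Suc m)"
      using assms(1) closure_approachable by blast
    from y(1) obtain N b where "norm y < 1" "N \<ge> 1" "\<forall>k\<in>{1..N}. b k \<in> {-1, 0, 1 :: int}"
      "1 + (\<Sum>k=1..N. of_int (b k) * y ^ k) = 0"
      unfolding M0_set_def unit_disc_def by blast
    with y(2) show "\<exists>w N b. norm w < 1 \<and> N \<ge> 1 \<and> (\<forall>k\<in>{1..N}. b k \<in> {-1, 0, 1 :: int}) \<and>
      1 + (\<Sum>k=1..N. of_int (b k) * w ^ k) = 0 \<and> dist w z < 1 / real (Suc m)"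
      by blast
  qed
  from choice3[OF this] obtain w N b where W: "\<forall>m. norm (w m) < 1 \<and> N m \<ge> 1 \<and> (\<forall>k\<in>{1..N m}. b m k \<in> {-1, 0, 1 :: int}) \<and>
      1 + (\<Sum>k=1..N m. of_int (b m k) * w m ^ k) = 0 \<and> dist (w m) z < 1 / real (Suc m)"
    by blast
  then have W: "norm (w m) < 1 \<and> N m \<ge> 1 \<and> (\<forall>k\<in>{1..N m}. b m k \<in> {-1, 0, 1 :: int}) \<and>
      1 + (\<Sum>k=1..N m. of_int (b m k) * w m ^ k) = 0 \<and> dist (w m) z < 1 / real (Suc m)" for m
    by blast
  define c where "c m k = (if k \<in> {1..N m} then b m k else 0)" for m k
  have cval: "\<forall>m k. c m k \<in> {-1,0,1}"
  proof (intro allI)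
    fix m k show "c m k \<in> {-1,0,1}"
      using W[of m] unfolding c_def by (cases "k \<in> {1..N m}") auto
  qed
  have okc: "okc (c m)" for m using cval by (simp add: okc_def)
  have Gc: "GG (c m) (w m) = 0" for m
  proof -
    have "(\<Sum>k. of_int (c m (Suc k)) * w m ^ Suc k) = (\<Sum>k<N m. of_int (c m (Suc k)) * w m ^ Suc k)"
      by (rule suminf_finite) (auto simp: c_def)
    also have "\<dots> = (\<Sum>k=1..N m. of_int (c m k) * w m ^ k)"
      using sum.atLeast1_atMost_eq[of "\<lambda>k. of_int (c m k) * w m ^ k" "N m"] by simp
    also have "\<dots> = (\<Sum>k=1..N m. of_int (b m k) * w m ^ k)"
      by (rule sum.cong) (auto simp: c_def)
    finally show ?thesis using W[of m] by (simp add: GG_def)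
  qed
  define a where "a k = (if k = 0 then 0 else pick c (Ak c (k - 1)) k)" for k
  have oka: "okc a" by (auto simp: okc_def a_def pick_def)
  have agree: "a k = c m k" if "m \<in> Ak c K" "1 \<le> k" "k \<le> K" for m k K
    using Ak_agree[OF that] that(2) by (simp add: a_def)
  have Ainf: "infinite (Ak c K)" for K using Ak_inf[OF cval] .
  have "continuous_on (ball 0 1) (GG a)"
    by (rule holomorphic_on_imp_continuous_on[OF holo[OF oka]])
  then have cont: "isCont (GG a) z" using z by (simp add: continuous_on_eq_continuous_at)
  have "GG a z = 0"
  proof (rule ccontr)
    assume ne: "GG a z \<noteq> 0"
    define e where "e = norm (GG a z)"
    have e: "e > 0" using ne by (simp add: e_def)
    then have "e / 2 > 0" by simp
    then obtain \<delta> where \<delta>: "\<delta> > 0" "\<And>x. dist x z < \<delta> \<Longrightarrow> dist (GG a x) (GG a z) < e / 2"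
      using cont \<open>e / 2 > 0\<close> unfolding continuous_at_eps_delta by blast
    define \<sigma> where "\<sigma> = sqrt ((1 + norm z) / 2)"
    have s0: "0 \<le> \<sigma>" by (simp add: \<sigma>_def)
    have s2: "\<sigma>^2 = (1 + norm z) / 2" by (simp add: \<sigma>_def)
    have s1: "\<sigma> < 1" using z by (simp add: \<sigma>_def)
    have "e * (1 - \<sigma>) / 4 > 0" using e s1 by simp
    from real_arch_pow_inv[OF this s1] obtain K where K: "\<sigma>^K < e * (1 - \<sigma>) / 4" by blast
    have "min \<delta> ((1 - norm z) / 2) > 0" using \<delta> z by simp
    from reals_Archimedean[OF this] obtain M :: nat where M: "inverse (real (Suc M)) < min \<delta> ((1 - norm z) / 2)"
      by blast
    have "\<exists>n\<ge>M. n \<in> Ak c K" using Ainf[of K] unfolding infinite_nat_iff_unbounded_le by blast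
    then obtain m where m: "m \<ge> M" "m \<in> Ak c K" by blast
    have "1 / real (Suc m) \<le> 1 / real (Suc M)" using m(1) by (simp add: frac_le)
    then have d: "dist (w m) z < min \<delta> ((1 - norm z) / 2)"
      using W[of m] M by (simp add: inverse_eq_divide)
    have "norm (w m) \<le> norm z + dist (w m) z"
      using norm_triangle_ineq2[of "w m" z] by (simp add: dist_norm)
    then have wm: "norm (w m) \<le> \<sigma>^2" using d s2 by simp
    have "norm (GG a (w m) - GG (c m) (w m)) \<le> 2 * \<sigma>^K / (1 - \<sigma>)"
      by (rule tail[OF oka okc _ s0 s1 wm]) (use agree m(2) in blast)
    also have "\<dots> < e / 2"
    proof -
      have "2 * \<sigma>^K < 2 * (e * (1 - \<sigma>) / 4)" using K by simp
      then show ?thesis using s1 by (simp add: field_simps)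
    qed
    finally have t1: "norm (GG a (w m)) < e / 2" using Gc[of m] by simp
    have t2: "dist (GG a (w m)) (GG a z) < e / 2" using \<delta>(2) d by simp
    have "norm (GG a z) \<le> norm (GG a (w m)) + dist (GG a (w m)) (GG a z)"
      using norm_triangle_ineq2[of "GG a z" "GG a (w m)"] by (simp add: dist_norm norm_minus_commute)
    then show False using t1 t2 by (simp add: e_def)
  qed
  then have "1 + (\<Sum>k. of_int (a (Suc k)) * z ^ Suc k) = 0" by (simp add: GG_def)
  moreover have "\<forall>k\<ge>1. a k \<in> {-1, 0, 1}" using oka by (simp add: okc_def)
  ultimately show ?thesis unfolding M_set_def using assms(2) by blast
qed

theorem mainTheorem6:
  shows "M_set = closure M0_set \<inter> unit_disc"
proof
  show "M_set \<subseteq> closure M0_set \<inter> unit_disc"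
    using M_sub by (auto simp: M_set_def)
  show "closure M0_set \<inter> unit_disc \<subseteq> M_set"
    using M_sup by blast
qed

end
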